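(* Let $\bar z$ be a feasible point of the MPCC $$\min f(z)\ \text{ s.t. }\ g(z)\le 0,\ h(z)=0,\ 0\le G(z)\perp H(z)\ge 0,$$ where $f:\mathbb{R}^n\to\mathbb{R}$, $g:\mathbb{R}^n\to\mathbb{R}^{n_g}$, $h:\mathbb{R}^n\to\mathbb{R}^{n_h}$, $G,H:\mathbb{R}^n\to\mathbb{R}^m$ are differentiable. Suppose $\bar z$ is B-stationary and MPCC-ACQ holds at $\bar z$. Then $\bar z$ is piecewise M-stationary.
   Context: The complementarity constraint $0\le G(z)\perp H(z)\ge 0$ means $G(z)\ge0$, $H(z)\ge 0$, $G_i(z)H_i(z)=0$ for all $i$. At a feasible $\bar z$ define $I_g(\bar z)=\{i: g_i(\bar z)=0\}$, $I_h(\bar z)=\{1,\dots,n_h\}$, $\alpha(\bar z)=\{i: G_i(\bar z)=0<H_i(\bar z)\}$, $\gamma(\bar z)=\{i: G_i(\bar z)>0=H_i(\bar z)\}$, $\beta(\bar z)=\{i: G_i(\bar z)=0=H_i(\bar z)\}$. Let $\mathcal T(\bar z)$ be the (Bouligand) tangent cone of the MPCC feasible set at $\bar z$. $\bar z$ is B-stationary if $\nabla f(\bar z)^Td\ge 0$ for all $d\in\mathcal T(\bar z)$. The MPCC-linearized tangent cone is $\mathcal T^{\rm lin}_{\rm MPCC}(\bar z)=\{d:\ \nabla g_i(\bar z)^Td\le 0\ (i\in I_g(\bar z));\ \nabla h_i(\bar z)^Td=0\ (i\in I_h(\bar z));\ \nabla G_i(\bar z)^Td=0\ (i\in\alpha(\bar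 z));\ \nabla H_i(\bar z)^Td=0\ (i\in \gamma(\bar z));\ \nabla G_i(\bar z)^Td\ge0,\ \nabla H_i(\bar z)^Td\ge 0,\ (\nabla G_i(\bar z)^Td)(\nabla H_i(\bar z)^Td)=0\ (i\in\beta(\bar z))\}$. MPCC-ACQ holds at $\bar z$ if $\mathcal T(\bar z)=\mathcal T^{\rm lin}_{\rm MPCC}(\bar z)$. Piecewise M-stationarity: let $\mathcal P(\beta(\bar z))$ be the set of all pairs $(\beta_1,\beta_2)$ with $\beta_1\cup\beta_2=\beta(\bar z)$, $\beta_1\cap\beta_2=\emptyset$. $\bar z$ is piecewise M-stationary if for every $(\beta_1,\beta_2)\in\mathcal P(\beta(\bar z))$ there exist multipliers $\bar\lambda=(\bar\lambda^g,\bar\lambda^h,\bar\lambda^G,\bar\lambda^H)$ (possibly depending on the partition) with $$0=\nabla f(\bar z)+\sum_{i=1}^{n_g}\bar\lambda^g_i\nabla g_i(\bar z)+\sum_{i=1}^{n_h}\bar\lambda^h_i\nabla h_i(\bar z)-\sum_{i\in\alpha(\bar z)\cup\beta(\bar z)}\bar\lambda^G_i\nabla G_i(\bar z)-\sum_{i\in\gamma(\bar z)\cup\beta(\bar z)}\bar\lambda^H_i\nabla H_i(\bar z),$$ $\bar\lambda^g_i\ge0$ and $\bar\lambda^g_ig_i(\bar z)=0$ for all $i$; $\bar\lambda^H_i\ge 0$ for $i\in\beta_1$; $\bar\lambda^G_i\ge0$ for $i\in\beta_2$; and for every $i\in\beta(\bar z)$ either $\bar\lambda^G_i,\bar\lambda^H_i\ge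 0$ or $\bar\lambda^G_i\bar\lambda^H_i=0$. *)

theory Defs
  imports "HOL-Analysis.Analysis"
begin

definition grad :: "(real^'n \<Rightarrow> real) \<Rightarrow> real^'n \<Rightarrow> real^'n" where
  "grad f z = (\<chi> j. frechet_derivative f (at z) (axis j 1))"

definition mpcc_feasible ::
  "nat \<Rightarrow> nat \<Rightarrow> nat \<Rightarrow> (nat \<Rightarrow> real^'n \<Rightarrow> real) \<Rightarrow> (nat \<Rightarrow> real^'n \<Rightarrow> real)
   \<Rightarrow> (nat \<Rightarrow> real^'n \<Rightarrow> real) \<Rightarrow> (nat \<Rightarrow> real^'n \<Rightarrow> real) \<Rightarrow> (real^'n) set" where
  "mpcc_feasible ng nh m g h G H =
     {z. (\<forall>i<ng. g i z \<le> 0) \<and> (\<forall>i<nh. h i z = 0) \<and>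
         (\<forall>i<m. G i z \<ge> 0 \<and> H i z \<ge> 0 \<and> G i z * H i z = 0)}"

definition active_g :: "nat \<Rightarrow> (nat \<Rightarrow> real^'n \<Rightarrow> real) \<Rightarrow> real^'n \<Rightarrow> nat set" where
  "active_g ng g z = {i. i < ng \<and> g i z = 0}"

definition alpha_set :: "nat \<Rightarrow> (nat \<Rightarrow> real^'n \<Rightarrow> real) \<Rightarrow> (nat \<Rightarrow> real^'n \<Rightarrow> real) \<Rightarrow> real^'n \<Rightarrow> nat set" where
  "alpha_set m G H z = {i. i < m \<and> G i z = 0 \<and> 0 < H i z}"

definition gamma_set :: "nat \<Rightarrow> (nat \<Rightarrow> real^'n \<Rightarrow> real) \<Rightarrow> (nat \<Rightarrow> real^'n \<Rightarrow> real) \<Rightarrow> real^'n \<Rightarrow> nat set" where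
  "gamma_set m G H z = {i. i < m \<and> G i z > 0 \<and> H i z = 0}"

definition beta_set :: "nat \<Rightarrow> (nat \<Rightarrow> real^'n \<Rightarrow> real) \<Rightarrow> (nat \<Rightarrow> real^'n \<Rightarrow> real) \<Rightarrow> real^'n \<Rightarrow> nat set" where
  "beta_set m G H z = {i. i < m \<and> G i z = 0 \<and> H i z = 0}"

definition tangent_cone :: "(real^'n) set \<Rightarrow> real^'n \<Rightarrow> (real^'n) set" where
  "tangent_cone S x = {d. \<exists>zs t. (\<forall>k. zs k \<in> S) \<and> zs \<longlonglongrightarrow> x \<and> (\<forall>k. t k > 0) \<and>
      t \<longlonglongrightarrow> 0 \<and> (\<lambda>k. (1 / t k) *\<^sub>R (zs k - x)) \<longlonglongrightarrow> d}"

definition mpcc_lin_cone ::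
  "nat \<Rightarrow> nat \<Rightarrow> nat \<Rightarrow> (nat \<Rightarrow> real^'n \<Rightarrow> real) \<Rightarrow> (nat \<Rightarrow> real^'n \<Rightarrow> real)
   \<Rightarrow> (nat \<Rightarrow> real^'n \<Rightarrow> real) \<Rightarrow> (nat \<Rightarrow> real^'n \<Rightarrow> real) \<Rightarrow> real^'n \<Rightarrow> (real^'n) set" where
  "mpcc_lin_cone ng nh m g h G H z =
     {d. (\<forall>i\<in>active_g ng g z. grad (g i) z \<bullet> d \<le> 0) \<and>
         (\<forall>i<nh. grad (h i) z \<bullet> d = 0) \<and>
         (\<forall>i\<in>alpha_set m G H z. grad (G i) z \<bullet> d = 0) \<and>
         (\<forall>i\<in>gamma_set m G H z. grad (H i) z \<bullet> d = 0) \<and>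
         (\<forall>i\<in>beta_set m G H z. grad (G i) z \<bullet> d \<ge> 0 \<and> grad (H i) z \<bullet> d \<ge> 0 \<and>
             (grad (G i) z \<bullet> d) * (grad (H i) z \<bullet> d) = 0)}"

definition B_stationary ::
  "(real^'n \<Rightarrow> real) \<Rightarrow> nat \<Rightarrow> nat \<Rightarrow> nat \<Rightarrow> (nat \<Rightarrow> real^'n \<Rightarrow> real) \<Rightarrow> (nat \<Rightarrow> real^'n \<Rightarrow> real)
   \<Rightarrow> (nat \<Rightarrow> real^'n \<Rightarrow> real) \<Rightarrow> (nat \<Rightarrow> real^'n \<Rightarrow> real) \<Rightarrow> real^'n \<Rightarrow> bool" where
  "B_stationary f ng nh m g h G H z \<longleftrightarrow>
     (\<forall>d\<in>tangent_cone (mpcc_feasible ng nh m g h G H) z. grad f z \<bullet> d \<ge> 0)"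

definition MPCC_ACQ ::
  "nat \<Rightarrow> nat \<Rightarrow> nat \<Rightarrow> (nat \<Rightarrow> real^'n \<Rightarrow> real) \<Rightarrow> (nat \<Rightarrow> real^'n \<Rightarrow> real)
   \<Rightarrow> (nat \<Rightarrow> real^'n \<Rightarrow> real) \<Rightarrow> (nat \<Rightarrow> real^'n \<Rightarrow> real) \<Rightarrow> real^'n \<Rightarrow> bool" where
  "MPCC_ACQ ng nh m g h G H z \<longleftrightarrow>
     tangent_cone (mpcc_feasible ng nh m g h G H) z = mpcc_lin_cone ng nh m g h G H z"

definition piecewise_M_stationary ::
  "(real^'n \<Rightarrow> real) \<Rightarrow> nat \<Rightarrow> nat \<Rightarrow> nat \<Rightarrow> (nat \<Rightarrow> real^'n \<Rightarrow> real) \<Rightarrow> (nat \<Rightarrow> real^'n \<Rightarrow> real)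
   \<Rightarrow> (nat \<Rightarrow> real^'n \<Rightarrow> real) \<Rightarrow> (nat \<Rightarrow> real^'n \<Rightarrow> real) \<Rightarrow> real^'n \<Rightarrow> bool" where
  "piecewise_M_stationary f ng nh m g h G H z \<longleftrightarrow>
     (\<forall>\<beta>1 \<beta>2. \<beta>1 \<union> \<beta>2 = beta_set m G H z \<and> \<beta>1 \<inter> \<beta>2 = {} \<longrightarrow>
       (\<exists>lg lh lG lH :: nat \<Rightarrow> real.
          grad f z + (\<Sum>i<ng. lg i *\<^sub>R grad (g i) z) + (\<Sum>i<nh. lh i *\<^sub>R grad (h i) z)
            - (\<Sum>i\<in>alpha_set m G H z \<union> beta_set m G H z. lG i *\<^sub>R grad (G i) z)
            - (\<Sum>i\<in>gamma_set m G H z \<union> beta_set m G H z. lH i *\<^sub>R grad (H i) z) = 0 \<and>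
          (\<forall>i<ng. lg i \<ge> 0 \<and> lg i * g i z = 0) \<and>
          (\<forall>i\<in>\<beta>1. lH i \<ge> 0) \<and> (\<forall>i\<in>\<beta>2. lG i \<ge> 0) \<and>
          (\<forall>i\<in>beta_set m G H z. (lG i \<ge> 0 \<and> lH i \<ge> 0) \<or> lG i * lH i = 0)))"

end

theory Submission
  imports Defs
begin

lemma subseq_conv:
  fixes x :: "nat \<Rightarrow> nat \<Rightarrow> real"
  assumes "finite I" "\<And>k i. i \<in> I \<Longrightarrow> x k i \<in> {0..1}"
  shows "\<exists>r l. strict_mono r \<and> (\<forall>i\<in>I. l i \<in> {0..1} \<and> (\<lambda>k. x (r k) i) \<longlonglongrightarrow> l i)"
  using assms
proof (induction I arbitrary: x rule: finite_induct)
  case empty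
  then show ?case by (auto intro: strict_mono_id)
next
  case (insert a I)
  then obtain r l where r: "strict_mono r" "\<forall>i\<in>I. l i \<in> {0..1} \<and> (\<lambda>k. x (r k) i) \<longlonglongrightarrow> l i"
    by blast
  have "\<forall>k. x (r k) a \<in> {0..1}" using insert by auto
  then obtain la r2 where r2: "la \<in> {0..1}" "strict_mono r2" "((\<lambda>k. x (r k) a) \<circ> r2) \<longlonglongrightarrow> la"
    using compact_Icc[of "0::real" 1] unfolding compact_eq_seq_compact_metric seq_compact_def by metis
  show ?case
  proof (intro exI conjI)
    show "strict_mono (r \<circ> r2)" using r r2 by (simp add: strict_mono_o)
    show "\<forall>i\<in>insert a I. (l(a:=la)) i \<in> {0..1} \<and> (\<lambda>k. x ((r \<circ> r2) k) i) \<longlonglongrightarrow> (l(a:=la)) i"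
    proof
      fix i assume "i \<in> insert a I"
      show "(l(a:=la)) i \<in> {0..1} \<and> (\<lambda>k. x ((r \<circ> r2) k) i) \<longlonglongrightarrow> (l(a:=la)) i"
      proof (cases "i = a")
        case True then show ?thesis using r2 by (simp add: o_def)
      next
        case False
        then have "i \<in> I" using \<open>i \<in> insert a I\<close> by auto
        then have "(\<lambda>k. x (r k) i) \<longlonglongrightarrow> l i" "l i \<in> {0..1}" using r by auto
        from LIMSEQ_subseq_LIMSEQ[OF this(1) r2(2)] show ?thesis using False \<open>l i \<in> _\<close> by (simp add: o_def)
      qed
    qed
  qed
qed

lemma farkas:
  fixes v :: "'k \<Rightarrow> real^'n" and b :: "real^'n"
  assumes "finite I"
  shows "(\<exists>u. (\<forall>k\<in>I. 0 \<le> u k) \<and> b = (\<Sum>k\<in>I. u k *\<^sub>R v k)) \<or> (\<exists>d. b \<bullet> d < 0 \<and> (\<forall>k\<in>I. 0 \<le> v k \<bullet> d))"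
proof -
  define K where "K = {(\<Sum>k\<in>I. u k *\<^sub>R v k) | u. \<forall>k\<in>I. 0 \<le> u k}"
  have sub1: "K \<subseteq> convex_cone hull (v ` I)"
  proof
    fix x assume "x \<in> K"
    then obtain u where u: "\<forall>k\<in>I. 0 \<le> u k" "x = (\<Sum>k\<in>I. u k *\<^sub>R v k)" unfolding K_def by blast
    have "\<And>J. J \<subseteq> I \<Longrightarrow> (\<Sum>k\<in>J. u k *\<^sub>R v k) \<in> convex_cone hull (v ` I)"
    proof -
      fix J assume "J \<subseteq> I"
      then have "finite J" using assms finite_subset by blast
      then show "J \<subseteq> I \<Longrightarrow> (\<Sum>k\<in>J. u k *\<^sub>R v k) \<in> convex_cone hull (v ` I)"
      proof (induction J rule: finite_induct)
        case empty then show ?case by (simp add: convex_cone_hull_contains_0)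
      next
        case (insert a J)
        have "u a *\<^sub>R v a \<in> convex_cone hull (v ` I)"
          using insert u by (intro convex_cone_hull_mul) (auto intro: hull_inc)
        then show ?case using insert by (simp add: convex_cone_hull_add)
      qed
    qed
    then show "x \<in> convex_cone hull (v ` I)" using u by blast
  qed
  have cc: "convex_cone K"
    unfolding convex_cone_def
  proof (intro conjI)
    have "(\<Sum>k\<in>I. (0::real) *\<^sub>R v k) \<in> K" unfolding K_def by fastforce
    then show "K \<noteq> {}" by blast
    show "convex K" unfolding convex_def K_def
    proof (clarify)
      fix u u' :: "'k \<Rightarrow> real" and a c :: real
      assume h: "\<forall>k\<in>I. 0 \<le> u k" "\<forall>k\<in>I. 0 \<le> u' k" "0 \<le> a" "0 \<le> c" "a + c = 1"
      show "\<exists>w. a *\<^sub>R (\<Sum>k\<in>I. u k *\<^sub>R v k) + c *\<^sub>R (\<Sum>k\<in>I. u' k *\<^sub>R v k) = (\<Sum>k\<in>I. w k *\<^sub>R v k) \<and> (\<forall>k\<in>I. 0 \<le> w k)"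
        by (rule exI[of _ "\<lambda>k. a * u k + c * u' k"])
           (use h in \<open>auto simp: scaleR_sum_right sum.distrib[symmetric] scaleR_add_left\<close>)
    qed
    show "conic K" unfolding conic_def K_def
    proof (clarify)
      fix u :: "'k \<Rightarrow> real" and c :: real
      assume h: "\<forall>k\<in>I. 0 \<le> u k" "0 \<le> c"
      show "\<exists>w. c *\<^sub>R (\<Sum>k\<in>I. u k *\<^sub>R v k) = (\<Sum>k\<in>I. w k *\<^sub>R v k) \<and> (\<forall>k\<in>I. 0 \<le> w k)"
        by (rule exI[of _ "\<lambda>k. c * u k"]) (use h in \<open>auto simp: scaleR_sum_right\<close>)
    qed
  qed
  have "v ` I \<subseteq> K"
  proof
    fix x assume "x \<in> v ` I"
    then obtain j where j: "j \<in> I" "x = v j" by blast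
    have "(\<Sum>k\<in>I. (if k = j then 1 else 0) *\<^sub>R v k) = v j"
    proof -
      have "(\<Sum>k\<in>I. (if k = j then 1 else 0) *\<^sub>R v k) = (\<Sum>k\<in>I. if k = j then v k else 0)"
        by (rule sum.cong) auto
      also have "\<dots> = v j" using j assms by (simp add: sum.delta)
      finally show ?thesis .
    qed
    then show "x \<in> K" unfolding K_def using j by (intro CollectI exI[of _ "\<lambda>k. if k = j then 1 else 0"]) auto
  qed
  then have "convex_cone hull (v ` I) \<subseteq> K" using cc by (simp add: hull_minimal)
  with sub1 have KK: "K = convex_cone hull (v ` I)" by blast
  have clK: "closed K" unfolding KK using assms by (simp add: closed_convex_cone_hull)
  show ?thesis
  proof (cases "b \<in> K")
    case True then show ?thesis unfolding K_def by blast
  next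
    case False
    obtain a c where ac: "a \<bullet> b < c" "\<forall>x\<in>K. c < a \<bullet> x"
      using separating_hyperplane_closed_point[OF convex_convex_cone_hull[of "v ` I", folded KK] clK False] by blast
    have "0 \<in> K" using KK convex_cone_hull_contains_0 by auto
    then have c0: "c < 0" using ac by auto
    have pos: "0 \<le> a \<bullet> x" if "x \<in> K" for x
    proof (rule ccontr)
      assume "\<not> 0 \<le> a \<bullet> x"
      then have neg: "a \<bullet> x < 0" by simp
      define t where "t = c / (a \<bullet> x)"
      have "t \<ge> 0" unfolding t_def using neg c0 by (simp add: divide_nonpos_neg)
      then have "t *\<^sub>R x \<in> K" using cc that unfolding convex_cone_def conic_def by blast
      then have "c < a \<bullet> (t *\<^sub>R x)" using ac by blast
      also have "a \<bullet> (t *\<^sub>R x) = c" unfolding t_def using neg by simp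
      finally show False by simp
    qed
    have "\<forall>k\<in>I. 0 \<le> v k \<bullet> a" using pos \<open>v ` I \<subseteq> K\<close> by (metis image_subset_iff inner_commute)
    moreover have "b \<bullet> a < 0" using ac c0 by (simp add: inner_commute)
    ultimately show ?thesis by blast
  qed
qed

lemma near_conv:
  fixes x y :: "nat \<Rightarrow> real" and r :: "nat \<Rightarrow> nat"
  assumes "strict_mono r" "x \<longlonglongrightarrow> l" "\<And>k. x k \<le> y k" "\<And>k. y k \<le> x k + 1 / real (Suc (r k))"
  shows "y \<longlonglongrightarrow> l"
proof (rule tendsto_sandwich[of x y sequentially "\<lambda>k. x k + 1 / real (Suc (r k))"])
  show "\<forall>\<^sub>F n in sequentially. x n \<le> y n" using assms by simp
  show "\<forall>\<^sub>F n in sequentially. y n \<le> x n + 1 / real (Suc (r n))" using assms by simp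
  show "x \<longlonglongrightarrow> l" by fact
  have "(\<lambda>k. inverse (real (Suc k))) \<longlonglongrightarrow> 0" by (rule LIMSEQ_inverse_real_of_nat)
  from LIMSEQ_subseq_LIMSEQ[OF this assms(1)] have "(\<lambda>k. 1 / real (Suc (r k))) \<longlonglongrightarrow> 0"
    by (simp add: o_def inverse_eq_divide)
  from tendsto_add[OF assms(2) this] show "(\<lambda>k. x k + 1 / real (Suc (r k))) \<longlonglongrightarrow> l" by simp
qed

lemma pm_lemma:
  fixes \<Phi> :: "nat \<Rightarrow> (nat \<Rightarrow> real) \<Rightarrow> real" and B :: "nat set" and m :: nat
  assumes B: "B \<subseteq> {..<m}"
   and cont: "\<And>i y s. i \<in> B \<Longrightarrow> (\<And>j. j \<in> B \<Longrightarrow> (\<lambda>k. y k j) \<longlonglongrightarrow> s j) \<Longrightarrow> (\<lambda>k. \<Phi> i (y k)) \<longlonglongrightarrow> \<Phi> i s"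
   and face: "\<And>i s. i \<in> B \<Longrightarrow> (\<forall>j\<in>B. 0 \<le> s j \<and> s j \<le> 1) \<Longrightarrow> s i = 1 \<Longrightarrow> \<Phi> i s \<ge> 0"
  shows "\<exists>s. (\<forall>j\<in>B. 0 \<le> s j \<and> s j \<le> 1) \<and> (\<forall>i\<in>B. \<Phi> i s \<ge> 0 \<and> (\<Phi> i s = 0 \<or> s i = 0))"
proof -
  define sc :: "nat \<Rightarrow> (nat \<Rightarrow> nat) \<Rightarrow> nat \<Rightarrow> real" where "sc p x = (\<lambda>j. real (x j) / real p)" for p x
  define lab :: "nat \<Rightarrow> (nat \<Rightarrow> nat) \<Rightarrow> nat \<Rightarrow> nat" where
    "lab p x i = (if i \<in> B then (if x i = p \<or> (x i \<noteq> 0 \<and> \<Phi> i (sc p x) \<ge> 0) then 1 else 0)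
                  else (if x i = p then 1 else 0))" for p x i
  have kuhn: "\<exists>q. (\<forall>i<m. q i < Suc k) \<and> (\<forall>i<m. \<exists>r s. (\<forall>j<m. q j \<le> r j \<and> r j \<le> q j + 1) \<and>
      (\<forall>j<m. q j \<le> s j \<and> s j \<le> q j + 1) \<and> lab (Suc k) r i = 1 \<and> lab (Suc k) s i = 0)" for k
  proof -
    obtain q where q: "\<forall>i<m. q i < Suc k"
      "\<forall>i<m. \<exists>r s. (\<forall>j<m. q j \<le> r j \<and> r j \<le> q j + 1) \<and> (\<forall>j<m. q j \<le> s j \<and> s j \<le> q j + 1) \<and> lab (Suc k) r i \<noteq> lab (Suc k) s i"
      by (rule kuhn_lemma[of "Suc k" m "lab (Suc k)"]) (auto simp: lab_def)
    have l01: "lab p x i = 0 \<or> lab p x i = 1" for p x i by (simp add: lab_def)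
    show ?thesis
    proof (rule exI[of _ q], intro conjI allI impI)
      show "i < m \<Longrightarrow> q i < Suc k" for i using q by auto
      fix i assume "i < m"
      then obtain r s where rs: "\<forall>j<m. q j \<le> r j \<and> r j \<le> q j + 1" "\<forall>j<m. q j \<le> s j \<and> s j \<le> q j + 1"
        "lab (Suc k) r i \<noteq> lab (Suc k) s i" using q by blast
      show "\<exists>r s. (\<forall>j<m. q j \<le> r j \<and> r j \<le> q j + 1) \<and> (\<forall>j<m. q j \<le> s j \<and> s j \<le> q j + 1) \<and>
            lab (Suc k) r i = 1 \<and> lab (Suc k) s i = 0"
      proof (cases "lab (Suc k) r i = 1")
        case True
        then show ?thesis using rs l01[of "Suc k" s i] by metis
      next
        case False
        then show ?thesis using rs l01[of "Suc k" s i] l01[of "Suc k" r i] by metis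
      qed
    qed
  qed
  then obtain Q where Q: "\<And>k. \<forall>i<m. Q k i < Suc k"
    "\<And>k. \<forall>i<m. \<exists>r s. (\<forall>j<m. Q k j \<le> r j \<and> r j \<le> Q k j + 1) \<and>
      (\<forall>j<m. Q k j \<le> s j \<and> s j \<le> Q k j + 1) \<and> lab (Suc k) r i = 1 \<and> lab (Suc k) s i = 0"
    by metis
  then obtain R S where RS: "\<And>k i. i < m \<Longrightarrow> (\<forall>j<m. Q k j \<le> R k i j \<and> R k i j \<le> Q k j + 1) \<and>
      (\<forall>j<m. Q k j \<le> S k i j \<and> S k i j \<le> Q k j + 1) \<and> lab (Suc k) (R k i) i = 1 \<and> lab (Suc k) (S k i) i = 0"
    by metis
  define x where "x k j = sc (Suc k) (Q k) j" for k j
  have x01: "x k j \<in> {0..1}" if "j \<in> B" for k j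
    using Q(1)[of k] B that by (auto simp: x_def sc_def)
  obtain r l where rl: "strict_mono r" "\<forall>i\<in>B. l i \<in> {0..1} \<and> (\<lambda>k. x (r k) i) \<longlonglongrightarrow> l i"
    using subseq_conv[of B x] x01 B finite_subset[OF B] by blast
  have cube: "\<forall>j\<in>B. 0 \<le> l j \<and> l j \<le> 1" using rl by auto
  have nearpt: "(\<lambda>k. sc (Suc (r k)) (Z k) j) \<longlonglongrightarrow> l j"
    if "j \<in> B" "\<And>k. Q (r k) j \<le> Z k j \<and> Z k j \<le> Q (r k) j + 1" for Z j
  proof (rule near_conv[OF rl(1)])
    show "(\<lambda>k. x (r k) j) \<longlonglongrightarrow> l j" using rl that by auto
    fix k
    show "x (r k) j \<le> sc (Suc (r k)) (Z k) j" using that(2)[of k] by (simp add: x_def sc_def divide_right_mono)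
    have "real (Z k j) \<le> real (Q (r k) j) + 1" using that(2)[of k] by linarith
    then show "sc (Suc (r k)) (Z k) j \<le> x (r k) j + 1 / real (Suc (r k))"
      by (simp add: x_def sc_def add_divide_distrib[symmetric] divide_right_mono)
  qed
  have cubept: "\<forall>j\<in>B. 0 \<le> sc (Suc k) z j \<and> sc (Suc k) z j \<le> 1"
    if "\<forall>j<m. Q k j \<le> z j \<and> z j \<le> Q k j + 1" for k z
  proof
    fix j assume "j \<in> B"
    then have "j < m" using B by auto
    then have "z j \<le> Suc k" using that Q(1)[of k] by fastforce
    then show "0 \<le> sc (Suc k) z j \<and> sc (Suc k) z j \<le> 1" by (simp add: sc_def)
  qed
  have main: "\<Phi> i l \<ge> 0 \<and> (\<Phi> i l = 0 \<or> l i = 0)" if iB: "i \<in> B" for i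
  proof -
    have im: "i < m" using iB B by auto
    define yR where "yR k = sc (Suc (r k)) (R (r k) i)" for k
    define yS where "yS k = sc (Suc (r k)) (S (r k) i)" for k
    have cR: "(\<lambda>k. yR k j) \<longlonglongrightarrow> l j" if "j \<in> B" for j
      unfolding yR_def using that B RS[OF im] by (intro nearpt) auto
    have cS: "(\<lambda>k. yS k j) \<longlonglongrightarrow> l j" if "j \<in> B" for j
      unfolding yS_def using that B RS[OF im] by (intro nearpt) auto
    have limR: "(\<lambda>k. \<Phi> i (yR k)) \<longlonglongrightarrow> \<Phi> i l" by (rule cont[OF iB cR])
    have limS: "(\<lambda>k. \<Phi> i (yS k)) \<longlonglongrightarrow> \<Phi> i l" by (rule cont[OF iB cS])
    have posR: "\<Phi> i (yR k) \<ge> 0" for k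
    proof -
      have lab1: "lab (Suc (r k)) (R (r k) i) i = 1" using RS[OF im] by blast
      have cb: "\<forall>j\<in>B. 0 \<le> yR k j \<and> yR k j \<le> 1" unfolding yR_def using cubept RS[OF im] by blast
      show ?thesis
      proof (cases "R (r k) i i = Suc (r k)")
        case True
        then have "yR k i = 1" by (simp add: yR_def sc_def)
        then show ?thesis using face[OF iB cb] by simp
      next
        case False
        then show ?thesis using lab1 iB by (auto simp: lab_def yR_def split: if_splits)
      qed
    qed
    have ge: "\<Phi> i l \<ge> 0"
      using LIMSEQ_le_const[OF limR] posR by blast
    have negS: "S (r k) i i = 0 \<or> \<Phi> i (yS k) < 0" for k
    proof -
      have "lab (Suc (r k)) (S (r k) i) i = 0" using RS[OF im] by blast
      then show ?thesis using iB by (auto simp: lab_def yS_def split: if_splits)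
    qed
    have "\<Phi> i l = 0 \<or> l i = 0"
    proof (rule ccontr)
      assume "\<not> (\<Phi> i l = 0 \<or> l i = 0)"
      then have p1: "\<Phi> i l > 0" and p2: "l i > 0" using ge cube iB by auto
      have e1: "\<forall>\<^sub>F k in sequentially. \<Phi> i (yS k) > 0" using order_tendstoD(1)[OF limS p1] .
      have e2: "\<forall>\<^sub>F k in sequentially. yS k i > 0" using order_tendstoD(1)[OF cS[OF iB] p2] .
      obtain k where "\<Phi> i (yS k) > 0" "yS k i > 0"
        using eventually_happens'[OF _ eventually_conj[OF e1 e2]] by auto
      then show False using negS[of k] by (auto simp: yS_def sc_def)
    qed
    with ge show ?thesis by blast
  qed
  show ?thesis using cube main by blast
qed

theorem theorem2p2:
  fixes f :: "real^'n \<Rightarrow> real"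
    and g h G H :: "nat \<Rightarrow> real^'n \<Rightarrow> real"
    and ng nh m :: nat
    and zbar :: "real^'n"
  assumes "\<And>z. f differentiable (at z)"
    and "\<And>i z. i < ng \<Longrightarrow> g i differentiable (at z)"
    and "\<And>i z. i < nh \<Longrightarrow> h i differentiable (at z)"
    and "\<And>i z. i < m \<Longrightarrow> G i differentiable (at z)"
    and "\<And>i z. i < m \<Longrightarrow> H i differentiable (at z)"
    and "zbar \<in> mpcc_feasible ng nh m g h G H"
    and "B_stationary f ng nh m g h G H zbar"
    and "MPCC_ACQ ng nh m g h G H zbar"
  shows "piecewise_M_stationary f ng nh m g h G H zbar"
proof -
  define gf where "gf = grad f zbar"
  define gg where "gg i = grad (g i) zbar" for i
  define gh where "gh i = grad (h i) zbar" for i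
  define gG where "gG i = grad (G i) zbar" for i
  define gH where "gH i = grad (H i) zbar" for i
  define act where "act = active_g ng g zbar"
  define al where "al = alpha_set m G H zbar"
  define ga where "ga = gamma_set m G H zbar"
  define be where "be = beta_set m G H zbar"
  have act_sub: "act \<subseteq> {..<ng}" by (auto simp: act_def active_g_def)
  have al_sub: "al \<subseteq> {..<m}" by (auto simp: al_def alpha_set_def)
  have ga_sub: "ga \<subseteq> {..<m}" by (auto simp: ga_def gamma_set_def)
  have be_sub: "be \<subseteq> {..<m}" by (auto simp: be_def beta_set_def)
  have disj: "al \<inter> be = {}" "ga \<inter> be = {}" "al \<inter> ga = {}"
    by (auto simp: al_def be_def ga_def alpha_set_def beta_set_def gamma_set_def)
  have fin_be: "finite be" using be_sub finite_subset by blast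
  have stat: "gf \<bullet> d \<ge> 0" if "d \<in> mpcc_lin_cone ng nh m g h G H zbar" for d
    using assms(7,8) that unfolding B_stationary_def MPCC_ACQ_def gf_def by auto
  have lin_iff: "d \<in> mpcc_lin_cone ng nh m g h G H zbar \<longleftrightarrow>
     (\<forall>i\<in>act. gg i \<bullet> d \<le> 0) \<and> (\<forall>i<nh. gh i \<bullet> d = 0) \<and> (\<forall>i\<in>al. gG i \<bullet> d = 0) \<and>
     (\<forall>i\<in>ga. gH i \<bullet> d = 0) \<and>
     (\<forall>i\<in>be. gG i \<bullet> d \<ge> 0 \<and> gH i \<bullet> d \<ge> 0 \<and> (gG i \<bullet> d) * (gH i \<bullet> d) = 0)" for d
    unfolding mpcc_lin_cone_def gg_def gh_def gG_def gH_def act_def al_def ga_def be_def by simp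
  show ?thesis
    unfolding piecewise_M_stationary_def
  proof (intro allI impI)
    fix \<beta>1 \<beta>2 :: "nat set"
    assume part: "\<beta>1 \<union> \<beta>2 = beta_set m G H zbar \<and> \<beta>1 \<inter> \<beta>2 = {}"
    then have part': "\<beta>1 \<union> \<beta>2 = be" "\<beta>1 \<inter> \<beta>2 = {}" by (auto simp: be_def)
    show "\<exists>lg lh lG lH.
            grad f zbar + (\<Sum>i<ng. lg i *\<^sub>R grad (g i) zbar) + (\<Sum>i<nh. lh i *\<^sub>R grad (h i) zbar) -
            (\<Sum>i\<in>alpha_set m G H zbar \<union> beta_set m G H zbar. lG i *\<^sub>R grad (G i) zbar) -
            (\<Sum>i\<in>gamma_set m G H zbar \<union> beta_set m G H zbar. lH i *\<^sub>R grad (H i) zbar) = 0 \<and>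
            (\<forall>i<ng. 0 \<le> lg i \<and> lg i * g i zbar = 0) \<and> (\<forall>i\<in>\<beta>1. 0 \<le> lH i) \<and> (\<forall>i\<in>\<beta>2. 0 \<le> lG i) \<and>
            (\<forall>i\<in>beta_set m G H zbar. 0 \<le> lG i \<and> 0 \<le> lH i \<or> lG i * lH i = 0)"
      (is "\<exists>lg lh lG lH. ?M lg lh lG lH")
    proof (rule ccontr)
      assume noM: "\<not> (\<exists>lg lh lG lH. ?M lg lh lG lH)"
      have b12: "\<beta>1 \<subseteq> be" "\<beta>2 \<subseteq> be" using part' by auto
      have n21': "i \<notin> \<beta>2" if "i \<in> \<beta>1" for i using that part' by auto
      define Pd where "Pd C d = (gf \<bullet> d < 0 \<and> (\<forall>i\<in>act. gg i \<bullet> d \<le> 0) \<and> (\<forall>i<nh. gh i \<bullet> d = 0) \<and>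
          (\<forall>i\<in>al. gG i \<bullet> d = 0) \<and> (\<forall>i\<in>ga. gH i \<bullet> d = 0) \<and>
          (\<forall>i\<in>C. gG i \<bullet> d \<ge> 0 \<and> gH i \<bullet> d \<ge> 0) \<and> (\<forall>i\<in>\<beta>1 - C. gG i \<bullet> d = 0) \<and>
          (\<forall>i\<in>\<beta>2 - C. gH i \<bullet> d = 0))" for C d
      have dex: "\<exists>d. Pd C d" if C: "C \<subseteq> be" for C
      proof -
        define N where "N = ng + nh + m"
        define ok where "ok t i = ((t = 0 \<and> i \<in> act) \<or> ((t = 1 \<or> t = 2) \<and> i < nh) \<or>
            (t = 3 \<and> (i \<in> al \<or> (i \<in> be \<and> \<not> (i \<in> \<beta>2 \<and> i \<notin> C)))) \<or>
            (t = 4 \<and> (i \<in> al \<or> (i \<in> \<beta>1 \<and> i \<notin> C))) \<or>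
            (t = 5 \<and> (i \<in> ga \<or> (i \<in> be \<and> \<not> (i \<in> \<beta>1 \<and> i \<notin> C)))) \<or>
            (t = 6 \<and> (i \<in> ga \<or> (i \<in> \<beta>2 \<and> i \<notin> C))))" for t i :: nat
        define vv where "vv k = (if fst k = 0 then - gg (snd k) else if fst k = 1 then gh (snd k)
           else if fst k = 2 then - gh (snd k) else if fst k = 3 then gG (snd k)
           else if fst k = (4::nat) then - gG (snd k) else if fst k = 5 then gH (snd k) else - gH (snd k))" for k
        define I where "I = {k \<in> {..<7::nat} \<times> {..<N}. ok (fst k) (snd k)}"
        have Cm: "i < m" if "i \<in> be" for i using that be_sub by auto
        have n21: "i \<notin> \<beta>2" if "i \<in> \<beta>1" for i using that part' by auto
        have n12: "i \<notin> \<beta>1" if "i \<in> \<beta>2" for i using that part' by auto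
        have finI: "finite I" unfolding I_def by auto
        have memI: "(t, i) \<in> I \<longleftrightarrow> t < 7 \<and> i < N \<and> ok t i" for t i unfolding I_def by auto
        consider (rep) u where "\<forall>k\<in>I. 0 \<le> u k" "gf = (\<Sum>k\<in>I. u k *\<^sub>R vv k)"
          | (sep) d where "gf \<bullet> d < 0" "\<forall>k\<in>I. 0 \<le> vv k \<bullet> d"
          using farkas[OF finI, of gf vv] by blast
        then show ?thesis
        proof cases
          case rep
          define u' where "u' k = (if k \<in> I then u k else 0)" for k
          define lg where "lg i = u' (0, i)" for i
          define lh where "lh i = u' (2, i) - u' (1, i)" for i
          define lG where "lG i = u' (3, i) - u' (4, i)" for i
          define lH where "lH i = u' (5, i) - u' (6, i)" for i
          have u'nn: "0 \<le> u' k" for k using rep(1) by (simp add: u'_def)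
          have u'0: "u' (t, i) = 0" if "\<not> ok t i" for t i using that by (simp add: u'_def memI)
          have zh: "u' (1, i) = 0 \<and> u' (2, i) = 0" if "\<not> i < nh" for i
            using that by (auto intro!: u'0 simp: ok_def)
          have zG: "u' (3, i) = 0 \<and> u' (4, i) = 0" if "i \<notin> al \<union> be" for i
            using that b12 by (auto intro!: u'0 simp: ok_def)
          have zH: "u' (5, i) = 0 \<and> u' (6, i) = 0" if "i \<notin> ga \<union> be" for i
            using that b12 by (auto intro!: u'0 simp: ok_def)
          have Nb: "ng \<le> N" "nh \<le> N" "m \<le> N" by (auto simp: N_def)
          have e0: "gf = (\<Sum>k\<in>{..<7::nat} \<times> {..<N}. u' k *\<^sub>R vv k)"
            unfolding rep(2) by (rule sum.mono_neutral_cong_left) (auto simp: I_def u'_def)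
          also have "\<dots> = (\<Sum>t<7. \<Sum>i<N. u' (t, i) *\<^sub>R vv (t, i))"
            by (simp add: sum.cartesian_product)
          also have "\<dots> = (\<Sum>i<N. u' (0, i) *\<^sub>R vv (0, i)) + ((\<Sum>i<N. u' (1, i) *\<^sub>R vv (1, i)) + (\<Sum>i<N. u' (2, i) *\<^sub>R vv (2, i)))
             + ((\<Sum>i<N. u' (3, i) *\<^sub>R vv (3, i)) + (\<Sum>i<N. u' (4, i) *\<^sub>R vv (4, i)))
             + ((\<Sum>i<N. u' (5, i) *\<^sub>R vv (5, i)) + (\<Sum>i<N. u' (6, i) *\<^sub>R vv (6, i)))"
            by (simp add: numeral_eq_Suc add.assoc)
          finally have e1: "gf = \<dots>" .
          have T0: "(\<Sum>i<N. u' (0, i) *\<^sub>R vv (0, i)) = - (\<Sum>i<ng. lg i *\<^sub>R gg i)"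
          proof -
            have "(\<Sum>i<N. u' (0, i) *\<^sub>R vv (0, i)) = (\<Sum>i<N. - (lg i *\<^sub>R gg i))"
              by (simp add: vv_def lg_def)
            also have "\<dots> = (\<Sum>i<ng. - (lg i *\<^sub>R gg i))"
              by (rule sum.mono_neutral_right) (use Nb act_sub in \<open>auto simp: lg_def ok_def intro!: u'0\<close>)
            finally show ?thesis by (simp add: sum_negf)
          qed
          have T12: "(\<Sum>i<N. u' (1, i) *\<^sub>R vv (1, i)) + (\<Sum>i<N. u' (2, i) *\<^sub>R vv (2, i)) = - (\<Sum>i<nh. lh i *\<^sub>R gh i)"
          proof -
            have "(\<Sum>i<N. u' (1, i) *\<^sub>R vv (1, i)) + (\<Sum>i<N. u' (2, i) *\<^sub>R vv (2, i)) = (\<Sum>i<N. - (lh i *\<^sub>R gh i))"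
              by (simp add: vv_def lh_def sum.distrib[symmetric] algebra_simps)
            also have "\<dots> = (\<Sum>i<nh. - (lh i *\<^sub>R gh i))"
              by (rule sum.mono_neutral_right) (use Nb zh in \<open>auto simp: lh_def\<close>)
            finally show ?thesis by (simp add: sum_negf)
          qed
          have T34: "(\<Sum>i<N. u' (3, i) *\<^sub>R vv (3, i)) + (\<Sum>i<N. u' (4, i) *\<^sub>R vv (4, i)) = (\<Sum>i\<in>al \<union> be. lG i *\<^sub>R gG i)"
          proof -
            have "(\<Sum>i<N. u' (3, i) *\<^sub>R vv (3, i)) + (\<Sum>i<N. u' (4, i) *\<^sub>R vv (4, i)) = (\<Sum>i<N. lG i *\<^sub>R gG i)"
              by (simp add: vv_def lG_def sum.distrib[symmetric] algebra_simps)
            also have "\<dots> = (\<Sum>i\<in>al \<union> be. lG i *\<^sub>R gG i)"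
              by (rule sum.mono_neutral_left[symmetric]) (use Nb al_sub be_sub zG in \<open>auto simp: lG_def\<close>)
            finally show ?thesis .
          qed
          have T56: "(\<Sum>i<N. u' (5, i) *\<^sub>R vv (5, i)) + (\<Sum>i<N. u' (6, i) *\<^sub>R vv (6, i)) = (\<Sum>i\<in>ga \<union> be. lH i *\<^sub>R gH i)"
          proof -
            have "(\<Sum>i<N. u' (5, i) *\<^sub>R vv (5, i)) + (\<Sum>i<N. u' (6, i) *\<^sub>R vv (6, i)) = (\<Sum>i<N. lH i *\<^sub>R gH i)"
              by (simp add: vv_def lH_def sum.distrib[symmetric] algebra_simps)
            also have "\<dots> = (\<Sum>i\<in>ga \<union> be. lH i *\<^sub>R gH i)"
              by (rule sum.mono_neutral_left[symmetric]) (use Nb ga_sub be_sub zH in \<open>auto simp: lH_def\<close>)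
            finally show ?thesis .
          qed
          have eq: "gf + (\<Sum>i<ng. lg i *\<^sub>R gg i) + (\<Sum>i<nh. lh i *\<^sub>R gh i) - (\<Sum>i\<in>al \<union> be. lG i *\<^sub>R gG i)
              - (\<Sum>i\<in>ga \<union> be. lH i *\<^sub>R gH i) = 0"
            using e1 unfolding T0 T12 T34 T56 by (simp add: algebra_simps)
          have s1: "\<forall>i<ng. 0 \<le> lg i \<and> lg i * g i zbar = 0"
          proof (intro allI impI conjI)
            fix i assume "i < ng"
            show "0 \<le> lg i" by (simp add: lg_def u'nn)
            show "lg i * g i zbar = 0"
            proof (cases "i \<in> act")
              case True then show ?thesis by (simp add: act_def active_g_def)
            next
              case False then show ?thesis by (simp add: lg_def u'0 ok_def)
            qed
          qed
          have s2: "\<forall>i\<in>\<beta>1. 0 \<le> lH i"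
          proof
            fix i assume i: "i \<in> \<beta>1"
            then have "i \<notin> ga" "i \<notin> \<beta>2" using disj b12 n21 by auto
            then have "u' (6, i) = 0" by (intro u'0) (simp add: ok_def)
            then show "0 \<le> lH i" by (simp add: lH_def u'nn)
          qed
          have s3: "\<forall>i\<in>\<beta>2. 0 \<le> lG i"
          proof
            fix i assume i: "i \<in> \<beta>2"
            then have "i \<notin> al" "i \<notin> \<beta>1" using disj b12 n12 by auto
            then have "u' (4, i) = 0" by (intro u'0) (simp add: ok_def)
            then show "0 \<le> lG i" by (simp add: lG_def u'nn)
          qed
          have s4: "\<forall>i\<in>be. 0 \<le> lG i \<and> 0 \<le> lH i \<or> lG i * lH i = 0"
          proof
            fix i assume ib: "i \<in> be"
            have nal: "i \<notin> al" "i \<notin> ga" using ib disj by auto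
            show "0 \<le> lG i \<and> 0 \<le> lH i \<or> lG i * lH i = 0"
            proof (cases "i \<in> C")
              case True
              then show ?thesis using nal n21 n12 by (simp add: lG_def lH_def u'0 ok_def u'nn)
            next
              case False
              have "i \<in> \<beta>1 \<or> i \<in> \<beta>2" using ib part' by auto
              then show ?thesis
              proof
                assume "i \<in> \<beta>1"
                then have "lH i = 0" using nal n21 False by (simp add: lH_def u'0 ok_def)
                then show ?thesis by simp
              next
                assume "i \<in> \<beta>2"
                then have "lG i = 0" using nal n12 False by (simp add: lG_def u'0 ok_def)
                then show ?thesis by simp
              qed
            qed
          qed
          have "?M lg lh lG lH"
            using eq s1 s2 s3 s4 unfolding gf_def gg_def gh_def gG_def gH_def al_def be_def ga_def by blast
          with noM show ?thesis by blast
        next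
          case sep
          have mem: "0 \<le> vv (t, i) \<bullet> d" if "t < 7" "i < N" "ok t i" for t i
            using sep(2) memI that by blast
          show ?thesis
            unfolding Pd_def
          proof (intro exI[of _ d] conjI ballI allI impI)
            show "gf \<bullet> d < 0" by fact
            show "gg i \<bullet> d \<le> 0" if "i \<in> act" for i
              using mem[of 0 i] that act_sub by (auto simp: vv_def ok_def N_def)
            show "gh i \<bullet> d = 0" if "i < nh" for i
              using mem[of 1 i] mem[of 2 i] that by (auto simp: vv_def ok_def N_def)
            show "gG i \<bullet> d = 0" if "i \<in> al" for i
              using mem[of 3 i] mem[of 4 i] that al_sub by (auto simp: vv_def ok_def N_def)
            show "gH i \<bullet> d = 0" if "i \<in> ga" for i
              using mem[of 5 i] mem[of 6 i] that ga_sub by (auto simp: vv_def ok_def N_def)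
            show "gG i \<bullet> d \<ge> 0" if "i \<in> C" for i
              using mem[of 3 i] that C Cm[of i] part' by (auto simp: vv_def ok_def N_def)
            show "gH i \<bullet> d \<ge> 0" if "i \<in> C" for i
              using mem[of 5 i] that C Cm[of i] part' by (auto simp: vv_def ok_def N_def)
            show "gG i \<bullet> d = 0" if "i \<in> \<beta>1 - C" for i
              using mem[of 3 i] mem[of 4 i] that b12 Cm[of i] n21[of i] by (auto simp: vv_def ok_def N_def)
            show "gH i \<bullet> d = 0" if "i \<in> \<beta>2 - C" for i
              using mem[of 5 i] mem[of 6 i] that b12 Cm[of i] n12[of i] by (auto simp: vv_def ok_def N_def)
          qed
        qed
      qed
      have exd: "\<forall>C. \<exists>d. C \<subseteq> be \<longrightarrow> Pd C d" using dex by blast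
      obtain dC where dC0: "\<forall>C. C \<subseteq> be \<longrightarrow> Pd C (dC C)" using choice[OF exd] by blast
      have dC1: "gf \<bullet> dC C < 0" if "C \<subseteq> be" for C using dC0 that by (simp add: Pd_def)
      have dC2: "gg i \<bullet> dC C \<le> 0" if "C \<subseteq> be" "i \<in> act" for C i using dC0 that by (simp add: Pd_def)
      have dC3: "gh i \<bullet> dC C = 0" if "C \<subseteq> be" "i < nh" for C i using dC0 that by (simp add: Pd_def)
      have dC4: "gG i \<bullet> dC C = 0" if "C \<subseteq> be" "i \<in> al" for C i using dC0 that by (simp add: Pd_def)
      have dC5: "gH i \<bullet> dC C = 0" if "C \<subseteq> be" "i \<in> ga" for C i using dC0 that by (simp add: Pd_def)
      have dC6: "gG i \<bullet> dC C \<ge> 0 \<and> gH i \<bullet> dC C \<ge> 0" if "C \<subseteq> be" "i \<in> C" for C i using dC0 that by (simp add: Pd_def)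
      have dC7: "gG i \<bullet> dC C = 0" if "C \<subseteq> be" "i \<in> \<beta>1" "i \<notin> C" for C i using dC0 that by (simp add: Pd_def)
      have dC8: "gH i \<bullet> dC C = 0" if "C \<subseteq> be" "i \<in> \<beta>2" "i \<notin> C" for C i using dC0 that by (simp add: Pd_def)
      define w where "w C s = (\<Prod>j\<in>be. if j \<in> C then s j else 1 - s j)" for C and s :: "nat \<Rightarrow> real"
      define D where "D s = (\<Sum>C\<in>Pow be. w C s *\<^sub>R dC C)" for s
      define \<phi>v where "\<phi>v i = (if i \<in> \<beta>1 then gH i else gG i)" for i
      define \<psi>v where "\<psi>v i = (if i \<in> \<beta>1 then gG i else gH i)" for i
      define \<Phi> where "\<Phi> i s = \<phi>v i \<bullet> D s" for i s
      have inD: "a \<bullet> D s = (\<Sum>C\<in>Pow be. w C s * (a \<bullet> dC C))" for a s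
        by (simp add: D_def inner_sum_right)
      have wnn: "0 \<le> w C s" if "\<forall>j\<in>be. 0 \<le> s j \<and> s j \<le> 1" for C s
        using that by (auto simp: w_def intro!: prod_nonneg)
      have w0in: "w C s = 0" if "i \<in> be" "i \<in> C" "s i = 0" for i C s
        unfolding w_def using that fin_be by (intro prod_zero) auto
      have w0out: "w C s = 0" if "i \<in> be" "i \<notin> C" "s i = 1" for i C s
        unfolding w_def using that fin_be by (intro prod_zero) auto
      have i12: "i \<in> \<beta>1 \<or> i \<in> \<beta>2" if "i \<in> be" for i using that part' by auto
      have psi_nn: "0 \<le> \<psi>v i \<bullet> dC C" if "C \<subseteq> be" "i \<in> be" for i C
      proof (cases "i \<in> C")
        case True then show ?thesis using dC6[OF that(1)] by (simp add: \<psi>v_def)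
      next
        case False then show ?thesis using dC7[OF that(1) _ False] dC8[OF that(1) _ False] i12[OF that(2)] n21' by (auto simp: \<psi>v_def)
      qed
      have phi_C: "0 \<le> \<phi>v i \<bullet> dC C" if "C \<subseteq> be" "i \<in> C" for i C
        using dC6[OF that] by (simp add: \<phi>v_def)
      have psi_out: "\<psi>v i \<bullet> dC C = 0" if "C \<subseteq> be" "i \<in> be" "i \<notin> C" for i C
        using dC7[OF that(1) _ that(3)] dC8[OF that(1) _ that(3)] i12[OF that(2)] n21' by (auto simp: \<psi>v_def)
      obtain s where s: "\<forall>j\<in>be. 0 \<le> s j \<and> s j \<le> 1" "\<forall>i\<in>be. \<Phi> i s \<ge> 0 \<and> (\<Phi> i s = 0 \<or> s i = 0)"
      proof -
        have "\<exists>s. (\<forall>j\<in>be. 0 \<le> s j \<and> s j \<le> 1) \<and> (\<forall>i\<in>be. \<Phi> i s \<ge> 0 \<and> (\<Phi> i s = 0 \<or> s i = 0))"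
        proof (rule pm_lemma[OF be_sub])
          fix i and y :: "nat \<Rightarrow> nat \<Rightarrow> real" and s
          assume "i \<in> be" and conv: "\<And>j. j \<in> be \<Longrightarrow> (\<lambda>k. y k j) \<longlonglongrightarrow> s j"
          have wc: "(\<lambda>k. w C (y k)) \<longlonglongrightarrow> w C s" for C
            unfolding w_def
          proof (rule tendsto_prod)
            fix j assume "j \<in> be"
            then show "(\<lambda>k. if j \<in> C then y k j else 1 - y k j) \<longlonglongrightarrow> (if j \<in> C then s j else 1 - s j)"
              using conv by (cases "j \<in> C") (auto intro!: tendsto_diff)
          qed
          show "(\<lambda>k. \<Phi> i (y k)) \<longlonglongrightarrow> \<Phi> i s"
            unfolding \<Phi>_def inD by (rule tendsto_sum, rule tendsto_mult_right, rule wc)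
        next
          fix i and s :: "nat \<Rightarrow> real" assume i: "i \<in> be" and cube: "\<forall>j\<in>be. 0 \<le> s j \<and> s j \<le> 1" and one: "s i = 1"
          show "0 \<le> \<Phi> i s"
            unfolding \<Phi>_def inD
          proof (rule sum_nonneg)
            fix C assume "C \<in> Pow be"
            then have Cb: "C \<subseteq> be" by auto
            show "0 \<le> w C s * (\<phi>v i \<bullet> dC C)"
            proof (cases "i \<in> C")
              case True then show ?thesis using wnn[OF cube] phi_C[OF Cb] by simp
            next
              case False then show ?thesis using w0out[of i C s, OF i False one] by simp
            qed
          qed
        qed
        then show ?thesis using that by blast
      qed
      define d where "d = D s"
      have psi_d: "0 \<le> \<psi>v i \<bullet> d" if "i \<in> be" for i
        unfolding d_def inD using wnn[OF s(1)] psi_nn[OF _ that] by (intro sum_nonneg mult_nonneg_nonneg) auto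
      have psi_d0: "\<psi>v i \<bullet> d = 0" if "i \<in> be" "s i = 0" for i
        unfolding d_def inD
      proof (rule sum.neutral, rule ballI)
        fix C assume "C \<in> Pow be"
        then show "w C s * (\<psi>v i \<bullet> dC C) = 0"
          using w0in[of i C s, OF that(1) _ that(2)] psi_out[of C i, OF _ that(1)] by (cases "i \<in> C") auto
      qed
      have "d \<in> mpcc_lin_cone ng nh m g h G H zbar"
        unfolding lin_iff
      proof (intro conjI ballI allI impI)
        fix i assume "i \<in> act"
        then show "gg i \<bullet> d \<le> 0"
          unfolding d_def inD using wnn[OF s(1)] dC2 by (intro sum_nonpos mult_nonneg_nonpos) auto
      next
        fix i assume "i < nh"
        then show "gh i \<bullet> d = 0" unfolding d_def inD using dC3 by (intro sum.neutral) auto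
      next
        fix i assume "i \<in> al"
        then show "gG i \<bullet> d = 0" unfolding d_def inD using dC4 by (intro sum.neutral) auto
      next
        fix i assume "i \<in> ga"
        then show "gH i \<bullet> d = 0" unfolding d_def inD using dC5 by (intro sum.neutral) auto
      next
        fix i assume ib: "i \<in> be"
        have P: "0 \<le> \<psi>v i \<bullet> d" using psi_d[OF ib] .
        have F: "0 \<le> \<phi>v i \<bullet> d" "\<phi>v i \<bullet> d = 0 \<or> \<psi>v i \<bullet> d = 0"
          using s(2) ib psi_d0[OF ib] unfolding \<Phi>_def d_def by auto
        show "0 \<le> gG i \<bullet> d" using P F i12[OF ib] n21' by (auto simp: \<phi>v_def \<psi>v_def split: if_splits)
        show "0 \<le> gH i \<bullet> d" using P F i12[OF ib] n21' by (auto simp: \<phi>v_def \<psi>v_def split: if_splits)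
        show "(gG i \<bullet> d) * (gH i \<bullet> d) = 0" using P F i12[OF ib] n21' by (auto simp: \<phi>v_def \<psi>v_def split: if_splits)
      qed
      then have ge: "gf \<bullet> d \<ge> 0" by (rule stat)
      define Cs where "Cs = {j \<in> be. s j \<noteq> 0}"
      have Cs: "Cs \<in> Pow be" by (auto simp: Cs_def)
      have wpos: "0 < w Cs s"
        unfolding w_def using s(1) by (intro prod_pos) (auto simp: Cs_def less_le)
      have "gf \<bullet> d = w Cs s * (gf \<bullet> dC Cs) + (\<Sum>C\<in>Pow be - {Cs}. w C s * (gf \<bullet> dC C))"
        unfolding d_def inD using fin_be Cs by (simp add: sum.remove)
      also have "\<dots> < 0"
      proof (rule add_neg_nonpos)
        show "w Cs s * (gf \<bullet> dC Cs) < 0" using wpos dC1 Cs by (intro mult_pos_neg) auto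
        show "(\<Sum>C\<in>Pow be - {Cs}. w C s * (gf \<bullet> dC C)) \<le> 0"
          using wnn[OF s(1)] dC1 by (intro sum_nonpos mult_nonneg_nonpos) (auto simp: less_imp_le)
      qed
      finally show False using ge by simp
    qed
  qed
qed

end
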